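(* Let $L\subset\mathbb{Z}^3$ be the sublattice generated by $(4,0,0),(0,2,0),(0,0,2)$, and let $I\subset\mathbb{B}[x_1^{\pm1},x_2^{\pm1},x_3^{\pm1}]$ be the zero-dimensional tropical ideal of degree $2$ corresponding to $L$, i.e. the tropical ideal whose polynomials of minimal support are the binomials $\mathbf x^{\mathbf u}\oplus\mathbf x^{\mathbf v}$ with $\mathbf u\ne\mathbf v$, $\mathbf u-\mathbf v\in L$, and the trinomials $\mathbf x^{\mathbf u}\oplus\mathbf x^{\mathbf v}\oplus\mathbf x^{\mathbf w}$ with $\mathbf u,\mathbf v,\mathbf w$ lying in three distinct cosets of $L$. Then $I$ is not realizable: there is no field $K$ and ideal $J\subset K[x_1^{\pm1},x_2^{\pm1},x_3^{\pm1}]$ with $I=\operatorname{trop}(J)$.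
   Context: $\mathbb{B}=\{\infty,0\}$ with $\oplus=\min$ and multiplication $+$. For a field $K$ and $F\in K[x_1^{\pm1},\dots,x_n^{\pm1}]$, $\operatorname{trop}(F)=\bigoplus_{\mathbf u\in\operatorname{supp}(F)}\mathbf x^{\mathbf u}\in\mathbb{B}[x_1^{\pm1},\dots,x_n^{\pm1}]$, and for an ideal $J$, $\operatorname{trop}(J)$ is the ideal generated by $\{\operatorname{trop}(F):F\in J\}$. A tropical ideal is realizable if it equals $\operatorname{trop}(J)$ for some field $K$ and ideal $J$ over $K$. *)

theory Defs
  imports Main
begin

type_synonym exps = "int \<times> int \<times> int"

definition eadd :: "exps \<Rightarrow> exps \<Rightarrow> exps" where
  "eadd u v = (fst u + fst v, fst (snd u) + fst (snd v), snd (snd u) + snd (snd v))"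

definition esub :: "exps \<Rightarrow> exps \<Rightarrow> exps" where
  "esub u v = (fst u - fst v, fst (snd u) - fst (snd v), snd (snd u) - snd (snd v))"

definition supp :: "(exps \<Rightarrow> 'k::zero) \<Rightarrow> exps set" where
  "supp F = {u. F u \<noteq> 0}"

definition laurent :: "(exps \<Rightarrow> 'k::zero) set" where
  "laurent = {F. finite (supp F)}"

definition ladd :: "(exps \<Rightarrow> 'k::plus) \<Rightarrow> (exps \<Rightarrow> 'k) \<Rightarrow> exps \<Rightarrow> 'k" where
  "ladd F G = (\<lambda>w. F w + G w)"

definition lmult :: "(exps \<Rightarrow> 'k::comm_semiring_1) \<Rightarrow> (exps \<Rightarrow> 'k) \<Rightarrow> exps \<Rightarrow> 'k" where
  "lmult F G = (\<lambda>w. \<Sum>p\<in>{p \<in> supp F \<times> supp G. eadd (fst p) (snd p) = w}.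
                      F (fst p) * G (snd p))"

definition lideal :: "(exps \<Rightarrow> 'k::field) set \<Rightarrow> bool" where
  "lideal J \<longleftrightarrow> J \<subseteq> laurent \<and> (\<lambda>_. 0) \<in> J
     \<and> (\<forall>F\<in>J. \<forall>G\<in>J. ladd F G \<in> J)
     \<and> (\<forall>F\<in>J. \<forall>G\<in>laurent. lmult G F \<in> J)"

text \<open>Polynomials in B[x^{+-1}] (B = {inf,0}) are identified with their supports,
  i.e. finite subsets of Z^3 (the infinity polynomial is the empty set).
  Tropical addition (min) is union, multiplication is Minkowski sum.\<close>
definition tmult :: "exps set \<Rightarrow> exps set \<Rightarrow> exps set" where
  "tmult A B = {eadd a b | a b. a \<in> A \<and> b \<in> B}"

definition trop :: "(exps \<Rightarrow> 'k::zero) \<Rightarrow> exps set" where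
  "trop F = supp F"

inductive_set tgen :: "exps set set \<Rightarrow> exps set set" for S where
  zero: "{} \<in> tgen S"
| gen: "s \<in> S \<Longrightarrow> s \<in> tgen S"
| add: "A \<in> tgen S \<Longrightarrow> B \<in> tgen S \<Longrightarrow> A \<union> B \<in> tgen S"
| mult: "A \<in> tgen S \<Longrightarrow> finite G \<Longrightarrow> tmult G A \<in> tgen S"

definition trop_ideal :: "(exps \<Rightarrow> 'k::field) set \<Rightarrow> exps set set" where
  "trop_ideal J = tgen {trop F | F. F \<in> J}"

definition inL :: "exps \<Rightarrow> bool" where
  "inL u \<longleftrightarrow> (4::int) dvd fst u \<and> (2::int) dvd fst (snd u) \<and> (2::int) dvd snd (snd u)"

definition circuitL :: "exps set \<Rightarrow> bool" where
  "circuitL C \<longleftrightarrow>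
     (\<exists>u v. C = {u, v} \<and> u \<noteq> v \<and> inL (esub u v)) \<or>
     (\<exists>u v w. C = {u, v, w} \<and> \<not> inL (esub u v) \<and> \<not> inL (esub u w) \<and> \<not> inL (esub v w))"

text \<open>The tropical ideal I with these circuits: its elements (over B) are exactly the
  finite unions of circuits (including the empty union, the infinity polynomial).\<close>
definition I_L :: "exps set set" where
  "I_L = {A. finite A \<and> (\<forall>a\<in>A. \<exists>C. circuitL C \<and> a \<in> C \<and> C \<subseteq> A)}"

end

theory Submission
  imports Defs
begin

definition mono :: "'k::zero \<Rightarrow> exps \<Rightarrow> exps \<Rightarrow> 'k" where
  "mono c g = (\<lambda>w. if w = g then c else 0)"

definition sh :: "'k::comm_semiring_1 \<Rightarrow> exps \<Rightarrow> (exps \<Rightarrow> 'k) \<Rightarrow> exps \<Rightarrow> 'k" where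
  "sh c g F = (\<lambda>w. c * F (esub w g))"

lemma eadd_esub[simp]: "eadd g (esub w g) = w" "esub (eadd g a) g = a"
  by (auto simp: eadd_def esub_def prod_eq_iff)

lemma mono_laurent: "mono c g \<in> laurent"
proof -
  have "supp (mono c g) \<subseteq> {g}" by (auto simp: supp_def mono_def)
  then show ?thesis by (auto simp: laurent_def intro: finite_subset)
qed

lemma lmult_mono: "lmult (mono c g) F = sh c g F"
proof (rule ext)
  fix w
  show "lmult (mono c g) F w = sh c g F w"
  proof (cases "c = 0 \<or> F (esub w g) = 0")
    case True
    have E: "{p \<in> supp (mono c g) \<times> supp F. eadd (fst p) (snd p) = w} = {}"
      using True by (auto simp: supp_def mono_def)
    show ?thesis using True unfolding lmult_def sh_def E by auto
  next
    case False
    have "{p \<in> supp (mono c g) \<times> supp F. eadd (fst p) (snd p) = w} = {(g, esub w g)}"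
      using False by (auto simp: supp_def mono_def)
    then show ?thesis by (simp add: lmult_def sh_def mono_def)
  qed
qed

lemma sh_in: "lideal J \<Longrightarrow> F \<in> J \<Longrightarrow> sh c g F \<in> J"
  using mono_laurent[of c g] lmult_mono[of c g F] unfolding lideal_def by metis

lemma add_in: "lideal J \<Longrightarrow> F \<in> J \<Longrightarrow> G \<in> J \<Longrightarrow> (\<lambda>w. F w + G w) \<in> J"
  unfolding lideal_def ladd_def by blast

lemma tgen_cover:
  assumes "lideal J" "A \<in> tgen {trop F | F. F \<in> J}"
  shows "\<forall>a\<in>A. \<exists>F\<in>J. a \<in> supp F \<and> supp F \<subseteq> A"
  using assms(2)
proof induction
  case zero then show ?case by simp
next
  case (gen s) then show ?case by (auto simp: trop_def)
next
  case (add A B) then show ?case by blast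
next
  case (mult A G)
  show ?case
  proof
    fix x assume "x \<in> tmult G A"
    then obtain g a where x: "x = eadd g a" "a \<in> A" "g \<in> G" by (auto simp: tmult_def)
    then obtain F where F: "F \<in> J" "a \<in> supp F" "supp F \<subseteq> A" using mult.IH by blast
    have "sh 1 g F \<in> J" using sh_in[OF assms(1) F(1)] .
    moreover have "x \<in> supp (sh 1 g F)" using x F by (simp add: supp_def sh_def)
    moreover have "supp (sh 1 g F) \<subseteq> tmult G A"
    proof
      fix w assume "w \<in> supp (sh 1 g F)"
      then have "esub w g \<in> A" using F by (auto simp: supp_def sh_def)
      then show "w \<in> tmult G A" unfolding tmult_def
        by (intro CollectI exI[of _ g] exI[of _ "esub w g"]) (simp add: x(3))
    qed
    ultimately show "\<exists>F\<in>J. x \<in> supp F \<and> supp F \<subseteq> tmult G A" by blast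
  qed
qed

lemma inL_sym: "inL (esub u v) \<Longrightarrow> inL (esub v u)"
  by (auto simp: inL_def esub_def dvd_def) (metis minus_diff_eq mult_minus_right)+

lemma inL_refl: "inL (esub u u)" by (simp add: inL_def esub_def)

lemma circuit_cases:
  assumes "circuitL D"
  obtains u v where "D = {u,v}" "u \<noteq> v" "inL (esub u v)"
  | u v w where "D = {u,v,w}" "u \<noteq> v" "u \<noteq> w" "v \<noteq> w"
      "\<not> inL (esub u v)" "\<not> inL (esub u w)" "\<not> inL (esub v w)"
      "\<not> inL (esub v u)" "\<not> inL (esub w u)" "\<not> inL (esub w v)"
  using assms inL_refl inL_sym unfolding circuitL_def by metis

lemma circuit_min:
  assumes "circuitL C" "X \<in> I_L" "X \<subseteq> C" "X \<noteq> {}"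
  shows "X = C"
proof -
  obtain x where x: "x \<in> X" using assms(4) by blast
  then obtain D where D: "circuitL D" "x \<in> D" "D \<subseteq> X" using assms(2) by (auto simp: I_L_def)
  from assms(1) show ?thesis
  proof (cases rule: circuit_cases)
    case C: (1 u v)
    from D(1) show ?thesis
    proof (cases rule: circuit_cases)
      case (1 u' v')
      then show ?thesis using D(3) assms(3) C by auto
    next
      case (2 u' v' w')
      then show ?thesis using D(3) assms(3) C by auto
    qed
  next
    case C: (2 u v w)
    from D(1) show ?thesis
    proof (cases rule: circuit_cases)
      case (1 u' v')
      then show ?thesis using D(3) assms(3) C by auto
    next
      case (2 u' v' w')
      then show ?thesis using D(3) assms(3) C by auto
    qed
  qed
qed

lemma pair_empty:
  assumes "X \<in> I_L" "X \<subseteq> {x,y}" "\<not> inL (esub x y)"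
  shows "X = {}"
proof (rule ccontr)
  assume "X \<noteq> {}"
  then obtain z where z: "z \<in> X" by blast
  then obtain D where D: "circuitL D" "z \<in> D" "D \<subseteq> X" using assms(1) by (auto simp: I_L_def)
  have ny: "\<not> inL (esub y x)" using assms(3) inL_sym by blast
  from D(1) show False
  proof (cases rule: circuit_cases)
    case (1 u' v')
    then show False using D(3) assms(2,3) ny by auto
  next
    case (2 u' v' w')
    then show False using D(3) assms(2) by auto
  qed
qed

lemma circuit_IL: assumes "circuitL C" shows "C \<in> I_L"
proof -
  have "finite C" using assms by (cases rule: circuit_cases) auto
  then show ?thesis using assms unfolding I_L_def by blast
qed

lemma esub_eq: "(esub w g = x) = (w = eadd g x)"
  by (auto simp: eadd_def esub_def prod_eq_iff)

lemma sh_tri: assumes "F = (\<lambda>w. if w=x then \<alpha> else if w=y then \<beta> else if w=z then \<gamma> else 0)"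
  shows "sh k g F w = (if w = eadd g x then k*\<alpha> else if w = eadd g y then k*\<beta>
     else if w = eadd g z then k*\<gamma> else 0)"
  unfolding sh_def assms by (simp add: esub_eq)

lemma sh_pair: assumes "F = (\<lambda>w. if w=x then \<alpha> else if w=y then \<beta> else 0)"
  shows "sh k g F w = (if w = eadd g x then k*\<alpha> else if w = eadd g y then k*\<beta> else 0)"
  unfolding sh_def assms by (simp add: esub_eq)

lemma supp_in:
  assumes "trop_ideal J = I_L" "F \<in> J" shows "supp F \<in> I_L"
proof -
  have "supp F \<in> tgen {trop F | F. F \<in> J}" using assms(2) by (auto intro!: tgen.gen simp: trop_def)
  then show ?thesis using assms(1) by (simp add: trop_ideal_def)
qed

lemma circ_poly:
  assumes "lideal J" "trop_ideal J = I_L" "circuitL C" shows "\<exists>F\<in>J. supp F = C"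
proof -
  have "C \<in> tgen {trop F | F. F \<in> J}" using circuit_IL[OF assms(3)] assms(2) by (simp add: trop_ideal_def)
  moreover obtain a where "a \<in> C" using assms(3) by (cases rule: circuit_cases) auto
  ultimately obtain F where F: "F \<in> J" "a \<in> supp F" "supp F \<subseteq> C" using tgen_cover[OF assms(1)] by blast
  have "supp F = C" using circuit_min[OF assms(3) supp_in[OF assms(2) F(1)] F(3)] F(2) by blast
  then show ?thesis using F(1) by blast
qed

lemma pair_poly:
  assumes "supp F = {x,y}" "x \<noteq> y"
  shows "F = (\<lambda>w. if w = x then F x else if w = y then F y else 0)" "F x \<noteq> 0" "F y \<noteq> 0"
  using assms by (auto simp: supp_def fun_eq_iff)

lemma tri_poly:
  assumes "supp F = {x,y,z}" "x \<noteq> y" "x \<noteq> z" "y \<noteq> z"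
  shows "F = (\<lambda>w. if w = x then F x else if w = y then F y else if w = z then F z else 0)"
    "F x \<noteq> 0" "F y \<noteq> 0" "F z \<noteq> 0"
  using assms by (auto simp: supp_def fun_eq_iff)

theorem mainTheorem12:
  shows "\<not> (\<exists>J :: (exps \<Rightarrow> 'k::field) set. lideal J \<and> trop_ideal J = I_L)"
proof
  assume "\<exists>J :: (exps \<Rightarrow> 'k::field) set. lideal J \<and> trop_ideal J = I_L"
  then obtain J :: "(exps \<Rightarrow> 'k::field) set" where J: "lideal J" "trop_ideal J = I_L" by blast
  have "circuitL {(0,0,0),(0,2,0)}" unfolding circuitL_def
    by (rule disjI1, intro exI[of _ "(0,0,0)"] exI[of _ "(0,2,0)"]) (simp add: inL_def esub_def)
  then obtain B2 where B2: "B2 \<in> J" "supp B2 = {(0,0,0),(0,2,0)}" using circ_poly[OF J] by blast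
  have "circuitL {(0,0,0),(0,0,2)}" unfolding circuitL_def
    by (rule disjI1, intro exI[of _ "(0,0,0)"] exI[of _ "(0,0,2)"]) (simp add: inL_def esub_def)
  then obtain B3 where B3: "B3 \<in> J" "supp B3 = {(0,0,0),(0,0,2)}" using circ_poly[OF J] by blast
  have "circuitL {(0,0,0),(0,1,0),(0,0,1)}" unfolding circuitL_def
    by (rule disjI2, intro exI[of _ "(0,0,0)"] exI[of _ "(0,1,0)"] exI[of _ "(0,0,1)"]) (simp add: inL_def esub_def)
  then obtain T where T: "T \<in> J" "supp T = {(0,0,0),(0,1,0),(0,0,1)}" using circ_poly[OF J] by blast
  have "circuitL {(0,0,0),(0,1,0),(1,0,0)}" unfolding circuitL_def
    by (rule disjI2, intro exI[of _ "(0,0,0)"] exI[of _ "(0,1,0)"] exI[of _ "(1,0,0)"]) (simp add: inL_def esub_def)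
  then obtain S where S: "S \<in> J" "supp S = {(0,0,0),(0,1,0),(1,0,0)}" using circ_poly[OF J] by blast
  define b0 where "b0 = B2 (0,0,0)"
  define b2 where "b2 = B2 (0,2,0)"
  define c0 where "c0 = B3 (0,0,0)"
  define c2 where "c2 = B3 (0,0,2)"
  define p where "p = T (0,0,0)"
  define q where "q = T (0,1,0)"
  define r where "r = T (0,0,1)"
  define s where "s = S (0,0,0)"
  define t where "t = S (0,1,0)"
  define u where "u = S (1,0,0)"
  note B2f = pair_poly[OF B2(2), simplified, folded b0_def b2_def]
  note B3f = pair_poly[OF B3(2), simplified, folded c0_def c2_def]
  note Tf = tri_poly[OF T(2), simplified, folded p_def q_def r_def]
  note Sf = tri_poly[OF S(2), simplified, folded s_def t_def u_def]
  define H2 where "H2 = (\<lambda>w. sh (b2*c2*r) (0,0,1) T w + (sh (-(b2*c2*p)) (0,0,0) T w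
     + (sh (-(b2*c2*q)) (0,1,0) T w + (sh (-(b2*r*r)) (0,0,0) B3 w + sh (c2*q*q) (0,0,0) B2 w))))"
  have H2J: "H2 \<in> J" unfolding H2_def
    by (intro add_in sh_in J(1) T(1) B2(1) B3(1))
  have H2w: "H2 w = (if w = (0,0,1) then b2*c2*r*p else if w = (0,1,1) then b2*c2*r*q else if w = (0,0,2) then b2*c2*r*r else 0)
     + ((if w = (0,0,0) then -(b2*c2*p)*p else if w = (0,1,0) then -(b2*c2*p)*q else if w = (0,0,1) then -(b2*c2*p)*r else 0)
     + ((if w = (0,1,0) then -(b2*c2*q)*p else if w = (0,2,0) then -(b2*c2*q)*q else if w = (0,1,1) then -(b2*c2*q)*r else 0)
     + ((if w = (0,0,0) then -(b2*r*r)*c0 else if w = (0,0,2) then -(b2*r*r)*c2 else 0)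
     + (if w = (0,0,0) then c2*q*q*b0 else if w = (0,2,0) then c2*q*q*b2 else 0))))" for w
    unfolding H2_def sh_tri[OF Tf(1)] sh_pair[OF B2f(1)] sh_pair[OF B3f(1)] by (simp add: eadd_def)
  have "supp H2 \<subseteq> {(0,0,0),(0,1,0)}"
  proof
    fix w assume w: "w \<in> supp H2"
    show "w \<in> {(0,0,0),(0,1,0)}"
    proof (rule ccontr)
      assume nw: "w \<notin> {(0,0,0),(0,1,0)}"
      consider "w=(0,0,1)" | "w=(0,1,1)" | "w=(0,0,2)" | "w=(0,2,0)"
        | "w \<notin> {(0,0,1),(0,1,1),(0,0,2),(0,2,0),(0,0,0),(0,1,0)}" using nw by blast
      then have "H2 w = 0" by cases (simp_all add: H2w algebra_simps)
      then show False using w by (simp add: supp_def)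
    qed
  qed
  then have "supp H2 = {}" using pair_empty supp_in[OF J(2) H2J] by (simp add: inL_def esub_def)
  then have "H2 (0,1,0) = 0" by (auto simp: supp_def)
  then have "b2*c2*p*q + b2*c2*p*q = 0"
    by (simp add: H2w algebra_simps)
  then have two: "(2::'k) = 0" using B2f B3f Tf
    by (metis mult_2 mult_eq_0_iff)
  have two': "\<And>x::'k. x + x = 0" using two by (metis mult_2 mult_zero_left)
  define H4 where "H4 = (\<lambda>w. sh (b2*u) (1,0,0) S w + (sh (-(b2*s)) (0,0,0) S w
     + (sh (-(b2*t)) (0,1,0) S w + sh (t*t) (0,0,0) B2 w)))"
  have H4J: "H4 \<in> J" unfolding H4_def
    by (intro add_in sh_in J(1) S(1) B2(1))
  have H4w: "H4 w = (if w = (1,0,0) then b2*u*s else if w = (1,1,0) then b2*u*t else if w = (2,0,0) then b2*u*u else 0)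
     + ((if w = (0,0,0) then -(b2*s)*s else if w = (0,1,0) then -(b2*s)*t else if w = (1,0,0) then -(b2*s)*u else 0)
     + ((if w = (0,1,0) then -(b2*t)*s else if w = (0,2,0) then -(b2*t)*t else if w = (1,1,0) then -(b2*t)*u else 0)
     + (if w = (0,0,0) then t*t*b0 else if w = (0,2,0) then t*t*b2 else 0)))" for w
    unfolding H4_def sh_tri[OF Sf(1)] sh_pair[OF B2f(1)] by (simp add: eadd_def)
  have "supp H4 \<subseteq> {(0,0,0),(2,0,0)}"
  proof
    fix w assume w: "w \<in> supp H4"
    show "w \<in> {(0,0,0),(2,0,0)}"
    proof (rule ccontr)
      assume nw: "w \<notin> {(0,0,0),(2,0,0)}"
      consider "w=(1,0,0)" | "w=(1,1,0)" | "w=(0,1,0)" | "w=(0,2,0)"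
        | "w \<notin> {(1,0,0),(1,1,0),(0,1,0),(0,2,0),(0,0,0),(2,0,0)}" using nw by blast
      then have "H4 w = 0"
      proof cases
        case 3
        have "-(b2*s*t) + -(b2*s*t) = 0" by (rule two')
        then show ?thesis using 3 by (simp add: H4w algebra_simps)
      qed (simp_all add: H4w algebra_simps)
      then show False using w by (simp add: supp_def)
    qed
  qed
  then have "supp H4 = {}" using pair_empty supp_in[OF J(2) H4J] by (simp add: inL_def esub_def)
  then have "H4 (2,0,0) = 0" by (auto simp: supp_def)
  then have "b2*u*u = 0"
    by (simp add: H4w)
  then show False using B2f Sf by simp
qed

end
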